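(* For every integer $\ell\geq 1$, every finite digraph $G$ with $\delta^+(G)\geq (1+\sqrt{5})\ell$ contains $S^-_{2,\ell}$ as a subgraph.
   Context: Digraphs are finite, have no loops and no multiple copies of the same edge, but may contain two edges in opposite directions between a pair of vertices. $\delta^+(G)$ is the minimum out-degree of $G$. $S^-_{k,\ell}$ denotes the $(k-1)$-subdivision of the in-star with $\ell$ leaves, i.e. the oriented tree consisting of a centre vertex and $\ell$ directed paths of length $k$ each ending at the centre, pairwise sharing only the centre. Thus $S^-_{2,\ell}$ consists of a centre $c$ and $\ell$ vertex-disjoint (apart from $c$) directed paths $x_i\to a_i\to c$. Containing it as a subgraph means having a subgraph isomorphic to it. *)

theory Defs
  imports Complex_Main
begin

text \<open>A finite digraph: finite vertex set V, edge set E of ordered pairs within V,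
  no loops. Opposite edges are allowed; no multi-edges (E is a set).\<close>
definition digraph :: "'a set \<Rightarrow> ('a \<times> 'a) set \<Rightarrow> bool" where
  "digraph V E \<longleftrightarrow> finite V \<and> E \<subseteq> V \<times> V \<and> (\<forall>v. (v, v) \<notin> E)"

definition out_degree :: "('a \<times> 'a) set \<Rightarrow> 'a \<Rightarrow> nat" where
  "out_degree E v = card {w. (v, w) \<in> E}"

definition min_out_degree :: "'a set \<Rightarrow> ('a \<times> 'a) set \<Rightarrow> nat" where
  "min_out_degree V E = Min (out_degree E ` V)"

text \<open>G contains the subdivided in-star S^-_{2,l} as a subgraph: a centre c and
  vertices x_i, a_i (i < l), all 2l+1 vertices pairwise distinct, with edges
  x_i \<rightarrow> a_i and a_i \<rightarrow> c.\<close>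
definition contains_S2_in_star :: "'a set \<Rightarrow> ('a \<times> 'a) set \<Rightarrow> nat \<Rightarrow> bool" where
  "contains_S2_in_star V E l \<longleftrightarrow>
     (\<exists>c x a. c \<in> V \<and>
        inj_on x {..<l} \<and> inj_on a {..<l} \<and>
        x ` {..<l} \<inter> a ` {..<l} = {} \<and>
        c \<notin> x ` {..<l} \<and> c \<notin> a ` {..<l} \<and>
        (\<forall>i<l. x i \<in> V \<and> a i \<in> V \<and> (x i, a i) \<in> E \<and> (a i, c) \<in> E))"

end

theory Submission
  imports Defs
begin


lemma hall:
  fixes I :: "'i set" and A :: "'i \<Rightarrow> 'a set"
  assumes "finite I" "\<And>i. i \<in> I \<Longrightarrow> finite (A i)"
    "\<And>J. J \<subseteq> I \<Longrightarrow> card J \<le> card (\<Union>(A ` J))"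
  shows "\<exists>f. inj_on f I \<and> (\<forall>i\<in>I. f i \<in> A i)"
  using assms
proof (induction "card I" arbitrary: I A rule: less_induct)
  case less
  show ?case
  proof (cases "I = {}")
    case True then show ?thesis by auto
  next
    case False
    show ?thesis
    proof (cases "\<exists>J. J \<subseteq> I \<and> J \<noteq> {} \<and> J \<noteq> I \<and> card (\<Union>(A ` J)) = card J")
      case True
      then obtain J where J: "J \<subseteq> I" "J \<noteq> {}" "J \<noteq> I" "card (\<Union>(A ` J)) = card J" by blast
      have fJ: "finite J" using J(1) less.prems(1) finite_subset by blast
      have cJ: "card J < card I" using J less.prems(1) by (meson psubsetI psubset_card_mono)
      obtain g where g: "inj_on g J" "\<forall>i\<in>J. g i \<in> A i"
      proof -
        have "\<And>i. i \<in> J \<Longrightarrow> finite (A i)" using less.prems(2) J(1) by blast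
        moreover have "\<And>J'. J' \<subseteq> J \<Longrightarrow> card J' \<le> card (\<Union>(A ` J'))"
          using J(1) by (intro less.prems(3)) auto
        ultimately show ?thesis using less.hyps[OF cJ fJ, of A] that by blast
      qed
      define U where "U = \<Union>(A ` J)"
      define A2 where "A2 = (\<lambda>i. A i - U)"
      have cIJ: "card (I - J) < card I"
      proof -
        have "card (I - J) = card I - card J" using fJ J(1) by (rule card_Diff_subset)
        moreover have "card J > 0" using fJ J(2) by auto
        moreover have "card J \<le> card I" using J(1) less.prems(1) by (rule card_mono[rotated])
        ultimately show ?thesis by linarith
      qed
      have fU: "finite U" using fJ less.prems(2) J(1) unfolding U_def by blast
      have hall2: "card K \<le> card (\<Union>(A2 ` K))" if K: "K \<subseteq> I - J" for K
      proof -
        have fK: "finite K" using K less.prems(1) finite_subset by blast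
        have e1: "\<Union>(A2 ` K) = \<Union>(A ` (K \<union> J)) - U" unfolding A2_def U_def by auto
        have e2: "U \<subseteq> \<Union>(A ` (K \<union> J))" unfolding U_def by auto
        have e3: "finite (\<Union>(A ` (K \<union> J)))" using fK fJ K J(1) less.prems(2) by auto
        have "card (\<Union>(A2 ` K)) = card (\<Union>(A ` (K \<union> J))) - card U"
          using e1 e2 e3 by (simp add: card_Diff_subset finite_subset)
        moreover have "card (K \<union> J) \<le> card (\<Union>(A ` (K \<union> J)))" by (intro less.prems(3)) (use K J(1) in auto)
        moreover have "card (K \<union> J) = card K + card J" using K fK fJ by (auto intro: card_Un_disjoint)
        ultimately show ?thesis using J(4) U_def by simp
      qed
      obtain h where h: "inj_on h (I - J)" "\<forall>i\<in>I-J. h i \<in> A2 i"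
        using less.hyps[OF cIJ, of A2] less.prems hall2 by (auto simp: A2_def)
      define f where "f = (\<lambda>i. if i \<in> J then g i else h i)"
      have "inj_on f I"
      proof (rule inj_onI)
        fix i j assume ij: "i \<in> I" "j \<in> I" "f i = f j"
        show "i = j"
        proof (cases "i \<in> J"; cases "j \<in> J")
          assume "i \<in> J" "j \<in> J" then show ?thesis using ij g(1) by (auto simp: f_def inj_on_def)
        next
          assume "i \<notin> J" "j \<notin> J" then show ?thesis using ij h(1) by (auto simp: f_def inj_on_def)
        next
          assume a: "i \<in> J" "j \<notin> J"
          then have "f i \<in> U" using g(2) by (auto simp: f_def U_def)
          moreover have "f j \<notin> U" using a h(2) ij(2) by (auto simp: f_def A2_def)
          ultimately show ?thesis using ij by simp
        next
          assume a: "i \<notin> J" "j \<in> J"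
          then have "f j \<in> U" using g(2) by (auto simp: f_def U_def)
          moreover have "f i \<notin> U" using a h(2) ij(1) by (auto simp: f_def A2_def)
          ultimately show ?thesis using ij by simp
        qed
      qed
      moreover have "\<forall>i\<in>I. f i \<in> A i" using g(2) h(2) by (auto simp: f_def A2_def)
      ultimately show ?thesis by blast
    next
      case False2: False
      obtain i where i: "i \<in> I" using False by blast
      have "card {i} \<le> card (A i)" using less.prems(3)[of "{i}"] i by simp
      then obtain a where a: "a \<in> A i" by fastforce
      define I' where "I' = I - {i}"
      define A' where "A' = (\<lambda>j. A j - {a})"
      have cI': "card I' < card I"
      proof -
        have "card I > 0" using i less.prems(1) card_gt_0_iff by blast
        then show ?thesis using i less.prems(1) unfolding I'_def by simp
      qed
      have hallI': "card J \<le> card (\<Union>(A' ` J))" if J: "J \<subseteq> I'" for J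
      proof (cases "J = {}")
        case True then show ?thesis by simp
      next
        case Jne: False
        have JI: "J \<subseteq> I" "J \<noteq> I" using J i unfolding I'_def by auto
        have fJ: "finite J" using JI less.prems(1) finite_subset by blast
        have fU: "finite (\<Union>(A ` J))" using fJ JI less.prems(2) by auto
        have c1: "card J \<le> card (\<Union>(A ` J))" using less.prems(3) JI by auto
        have c2: "card (\<Union>(A ` J)) \<noteq> card J" using False2 JI Jne by blast
        have c3: "\<Union>(A' ` J) = \<Union>(A ` J) - {a}" unfolding A'_def by auto
        have c4: "card (\<Union>(A ` J) - {a}) \<ge> card (\<Union>(A ` J)) - 1"
          using fU by (simp add: card_Diff_singleton_if)
        have "card J \<le> card (\<Union>(A ` J)) - 1" using c1 c2 by linarith
        then show ?thesis unfolding c3 using c4 by linarith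
      qed
      obtain f' where f': "inj_on f' I'" "\<forall>j\<in>I'. f' j \<in> A' j"
        using less.hyps[OF cI', of A'] less.prems hallI' by (auto simp: I'_def A'_def)
      define f where "f = f'(i := a)"
      have "inj_on f I'"
      proof -
        have "\<And>j. j \<in> I' \<Longrightarrow> f j = f' j" unfolding f_def I'_def by auto
        then show ?thesis using f'(1) inj_on_cong by blast
      qed
      moreover have "f i \<notin> f ` I'" using f'(2) unfolding f_def A'_def I'_def by auto
      moreover have "I = insert i I'" using i unfolding I'_def by auto
      ultimately have "inj_on f I" by auto
      moreover have "\<forall>j\<in>I. f j \<in> A j" using f'(2) a unfolding f_def A'_def I'_def by auto
      ultimately show ?thesis by blast
    qed
  qed
qed



lemma select_pairs:
  fixes P :: "('a \<times> 'a) set"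
  shows "finite P \<Longrightarrow> inj_on fst P \<Longrightarrow> inj_on snd P \<Longrightarrow> (\<forall>p\<in>P. fst p \<noteq> snd p)
    \<Longrightarrow> 3 * l \<le> card P + 2 \<Longrightarrow> \<exists>Q\<subseteq>P. card Q = l \<and> fst ` Q \<inter> snd ` Q = {}"
proof (induction l arbitrary: P)
  case 0
  then show ?case by (intro exI[of _ "{}"]) auto
next
  case (Suc l)
  have "P \<noteq> {}" using Suc.prems(5) by auto
  then obtain u v where p: "(u, v) \<in> P" by auto
  define P' where "P' = {q\<in>P. q \<noteq> (u,v) \<and> fst q \<noteq> v \<and> snd q \<noteq> u}"
  have sub: "P - P' \<subseteq> {(u,v)} \<union> {q\<in>P. fst q = v} \<union> {q\<in>P. snd q = u}"
    unfolding P'_def by auto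
  have c1: "card {q\<in>P. fst q = v} \<le> Suc 0"
    using Suc.prems(1,2) by (subst card_le_Suc0_iff_eq) (auto simp: inj_on_def)
  have c2: "card {q\<in>P. snd q = u} \<le> Suc 0"
    using Suc.prems(1,3) by (subst card_le_Suc0_iff_eq) (auto simp: inj_on_def)
  have "card (P - P') \<le> card ({(u,v)} \<union> {q\<in>P. fst q = v} \<union> {q\<in>P. snd q = u})"
    using sub Suc.prems(1) by (intro card_mono) auto
  also have "\<dots> \<le> card {(u,v)} + card {q\<in>P. fst q = v} + card {q\<in>P. snd q = u}"
    using card_Un_le[of "{(u,v)} \<union> {q\<in>P. fst q = v}" "{q\<in>P. snd q = u}"]
      card_Un_le[of "{(u,v)}" "{q\<in>P. fst q = v}"] by linarith
  finally have "card (P - P') \<le> 3" using c1 c2 by simp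
  moreover have "P' \<subseteq> P" unfolding P'_def by auto
  moreover have "card (P - P') = card P - card P'"
    using Suc.prems(1) \<open>P' \<subseteq> P\<close> by (simp add: card_Diff_subset finite_subset)
  moreover have "card P' \<le> card P" using Suc.prems(1) \<open>P' \<subseteq> P\<close> by (simp add: card_mono)
  ultimately have cP': "3 * l \<le> card P' + 2" using Suc.prems(5) unfolding mult_Suc_right by linarith
  have fP': "finite P'" using Suc.prems(1) \<open>P' \<subseteq> P\<close> finite_subset by blast
  obtain Q' where Q': "Q' \<subseteq> P'" "card Q' = l" "fst ` Q' \<inter> snd ` Q' = {}"
    using Suc.IH[OF fP' inj_on_subset[OF Suc.prems(2) \<open>P' \<subseteq> P\<close>]
        inj_on_subset[OF Suc.prems(3) \<open>P' \<subseteq> P\<close>] _ cP'] Suc.prems(4) \<open>P' \<subseteq> P\<close> by blast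
  define Q where "Q = insert (u,v) Q'"
  have "(u,v) \<notin> Q'" using Q'(1) unfolding P'_def by auto
  moreover have "finite Q'" using finite_subset[OF Q'(1) fP'] .
  ultimately have "card Q = Suc l" using Q'(2) unfolding Q_def by (simp add: card_insert_disjoint)
  moreover have "Q \<subseteq> P" using Q'(1) p \<open>P' \<subseteq> P\<close> unfolding Q_def by auto
  moreover have "fst ` Q \<inter> snd ` Q = {}"
  proof -
    have "fst (u,v) \<noteq> snd (u,v)" using Suc.prems(4) p by blast
    then have "u \<noteq> v" by simp
    moreover have "u \<notin> snd ` Q'"
    proof
      assume "u \<in> snd ` Q'"
      then obtain q where "q \<in> Q'" "snd q = u" by blast
      then show False using Q'(1) unfolding P'_def by blast
    qed
    moreover have "v \<notin> fst ` Q'"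
    proof
      assume "v \<in> fst ` Q'"
      then obtain q where "q \<in> Q'" "fst q = v" by blast
      then show False using Q'(1) unfolding P'_def by blast
    qed
    ultimately show ?thesis using Q'(3) unfolding Q_def by auto
  qed
  ultimately show ?case by (intro exI[of _ Q]) simp
qed

lemma double_count:
  assumes "finite A" "finite B"
  shows "(\<Sum>a\<in>A. card {b\<in>B. R a b}) = (\<Sum>b\<in>B. card {a\<in>A. R a b})"
proof -
  have "\<And>a. card {b\<in>B. R a b} = (\<Sum>b\<in>B. if R a b then 1 else 0)"
    by (rule trans[OF card_eq_sum sum.inter_filter[OF assms(2)]])
  moreover have "\<And>b. card {a\<in>A. R a b} = (\<Sum>a\<in>A. if R a b then 1 else 0)"
    by (rule trans[OF card_eq_sum sum.inter_filter[OF assms(1)]])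
  moreover have "(\<Sum>a\<in>A. \<Sum>b\<in>B. (if R a b then 1 else 0)::nat) = (\<Sum>b\<in>B. \<Sum>a\<in>A. if R a b then 1 else 0)"
    by (rule sum.swap)
  ultimately show ?thesis by presburger
qed



lemma global_lemma:
  fixes V :: "'a set" and E :: "('a \<times> 'a) set" and K :: nat
  assumes fin: "finite V" and EV: "E \<subseteq> V \<times> V" and Vne: "V \<noteq> {}"
    and deg: "\<And>v. v \<in> V \<Longrightarrow> K \<le> card {w. (v,w) \<in> E}"
    and K1: "K \<ge> 1"
  shows "\<exists>c\<in>V. \<exists>W \<pi>. W \<subseteq> {b. (b,c) \<in> E} \<and> card W \<ge> K \<and> inj_on \<pi> W \<and> (\<forall>b\<in>W. (\<pi> b, b) \<in> E)"
proof -
  define par where "par b = {x. (x,b) \<in> E}" for b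
  define NP where "NP S = \<Union>(par ` S)" for S
  define df where "df S = int (card S) - int (card (NP S))" for S
  have NPV: "NP S \<subseteq> V" for S using EV unfolding NP_def par_def by auto
  have finNP: "finite (NP S)" for S using finite_subset[OF NPV fin] .
  have finpar: "finite (par b)" for b
  proof -
    have "par b \<subseteq> NP {b}" unfolding NP_def by auto
    then show ?thesis using finNP finite_subset by blast
  qed
  define D where "D = Max (df ` Pow V)"
  have Dge: "df S \<le> D" if "S \<subseteq> V" for S
    unfolding D_def using fin that by (intro Max_ge) auto
  have df0: "df {} = 0" unfolding df_def NP_def by simp
  have D0: "D \<ge> 0" using Dge[of "{}"] df0 by simp
  have NPVV: "NP V = V"
  proof
    show "NP V \<subseteq> V" by (rule NPV)
    show "V \<subseteq> NP V"
    proof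
      fix v assume v: "v \<in> V"
      have "card {w. (v,w) \<in> E} \<ge> 1" using deg[OF v] K1 by linarith
      then have "{w. (v,w) \<in> E} \<noteq> {}" by (metis card.empty not_one_le_zero)
      then obtain w where "(v,w) \<in> E" by blast
      then show "v \<in> NP V" using EV unfolding NP_def par_def by blast
    qed
  qed
  have dfV: "df V = 0" unfolding df_def NPVV by simp
  obtain S where S: "S \<subseteq> V" "df S = D" "S \<noteq> V"
  proof -
    have "D \<in> df ` Pow V" unfolding D_def using fin by (intro Max_in) auto
    then obtain S0 where S0: "S0 \<subseteq> V" "df S0 = D" by auto
    show ?thesis
    proof (cases "S0 = V")
      case True
      then have "D = 0" using S0 dfV by simp
      then show ?thesis using that[of "{}"] df0 Vne by auto
    next
      case False then show ?thesis using that S0 by blast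
    qed
  qed
  define A' where "A' b = Inl ` par b \<union> Inr ` {..<nat D}" for b :: 'a
  have hallc: "card J \<le> card (\<Union>(A' ` J))" if J: "J \<subseteq> V" for J
  proof (cases "J = {}")
    case True then show ?thesis by simp
  next
    case False
    have eq: "\<Union>(A' ` J) = Inl ` NP J \<union> Inr ` {..<nat D}"
      using False unfolding A'_def NP_def by auto
    have "card (\<Union>(A' ` J)) = card (Inl ` NP J :: ('a + nat) set) + card (Inr ` {..<nat D} :: ('a + nat) set)"
      unfolding eq using finNP by (intro card_Un_disjoint) auto
    also have "\<dots> = card (NP J) + nat D"
      by (simp add: card_image)
    finally have "card (\<Union>(A' ` J)) = card (NP J) + nat D" .
    moreover have "df J \<le> D" using Dge J by blast
    ultimately show ?thesis unfolding df_def using D0 by linarith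
  qed
  obtain f where f: "inj_on f V" "\<forall>b\<in>V. f b \<in> A' b"
    using hall[of V A'] fin hallc finpar unfolding A'_def by auto
  define W where "W = {b\<in>V. f b \<in> range Inl}"
  define \<pi> where "\<pi> b = projl (f b)" for b
  have Wpar: "(\<pi> b, b) \<in> E" if "b \<in> W" for b
  proof -
    have "f b \<in> A' b" "f b \<in> range Inl" using that f(2) unfolding W_def by auto
    then have "f b \<in> Inl ` par b" unfolding A'_def by auto
    then show ?thesis unfolding \<pi>_def par_def by auto
  qed
  have injpi: "inj_on \<pi> W"
  proof (rule inj_onI)
    fix b b' assume bb: "b \<in> W" "b' \<in> W" "\<pi> b = \<pi> b'"
    then have "f b = Inl (\<pi> b)" "f b' = Inl (\<pi> b')" unfolding W_def \<pi>_def by auto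
    then have "f b = f b'" using bb(3) by simp
    then show "b = b'" using f(1) bb(1,2) unfolding W_def inj_on_def by auto
  qed
  have finW: "finite W" using fin unfolding W_def by auto
  have WV: "W \<subseteq> V" unfolding W_def by auto
  have cVW: "card (V - W) \<le> nat D"
  proof -
    have "f ` (V - W) \<subseteq> Inr ` {..<nat D}"
    proof
      fix y assume "y \<in> f ` (V - W)"
      then obtain b where b: "b \<in> V" "b \<notin> W" "y = f b" by auto
      then have "f b \<in> A' b" "f b \<notin> range Inl" using f(2) unfolding W_def by auto
      then show "y \<in> Inr ` {..<nat D}" using b(3) unfolding A'_def by auto
    qed
    then have "card (f ` (V - W)) \<le> card (Inr ` {..<nat D} :: ('a + nat) set)"
      by (intro card_mono) auto
    also have "\<dots> = nat D" by (simp add: card_image)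
    finally show ?thesis using card_image[OF inj_on_subset[OF f(1), of "V - W"]] by auto
  qed
  have cW: "int (card W) \<ge> int (card V) - D"
  proof -
    have "card V = card W + card (V - W)" using fin WV
      by (metis card_Diff_subset card_mono diff_add_inverse le_add_diff_inverse finite_subset)
    then show ?thesis using cVW D0 by linarith
  qed
  define X where "X = NP S"
  define Y where "Y = V - S"
  have Yne: "Y \<noteq> {}" using S unfolding Y_def by auto
  have finY: "finite Y" using fin unfolding Y_def by auto
  have cX: "int (card X) = int (card S) - D" using S(2) unfolding df_def X_def by linarith
  have cY: "card Y = card V - card S" unfolding Y_def using fin S(1) by (simp add: card_Diff_subset finite_subset)
  have cSV: "card S \<le> card V" using fin S(1) by (simp add: card_mono)
  have outY: "{w. (b,w) \<in> E} \<subseteq> Y" if "b \<in> V" "b \<notin> X" for b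
  proof
    fix w assume w: "w \<in> {w. (b,w) \<in> E}"
    then have "w \<in> V" using EV by auto
    moreover have "w \<notin> S"
    proof
      assume "w \<in> S"
      then have "b \<in> X" using w unfolding X_def NP_def par_def by auto
      then show False using that by simp
    qed
    ultimately show "w \<in> Y" unfolding Y_def by auto
  qed
  have finX: "finite X" unfolding X_def by (rule finNP)
  have cWX: "int (card (W - X)) \<ge> int (card Y)"
  proof -
    have "card (W - X) \<ge> card W - card X" by (rule diff_card_le_card_Diff[OF finX])
    then show ?thesis using cW cX cY cSV by linarith
  qed
  have sum1: "(\<Sum>b\<in>W. card {c\<in>Y. (b,c) \<in> E}) \<ge> K * card Y"
  proof -
    have "K * card Y \<le> K * card (W - X)" using cWX by simp
    also have "\<dots> = (\<Sum>b\<in>W - X. K)" by simp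
    also have "\<dots> \<le> (\<Sum>b\<in>W - X. card {c\<in>Y. (b,c) \<in> E})"
    proof (rule sum_mono)
      fix b assume b: "b \<in> W - X"
      then have "{c\<in>Y. (b,c) \<in> E} = {w. (b,w) \<in> E}" using outY[of b] WV by auto
      then show "K \<le> card {c\<in>Y. (b,c) \<in> E}" using deg[of b] b WV by auto
    qed
    also have "\<dots> \<le> (\<Sum>b\<in>W. card {c\<in>Y. (b,c) \<in> E})"
      using finW by (intro sum_mono2) auto
    finally show ?thesis .
  qed
  have "\<exists>c\<in>Y. K \<le> card {b\<in>W. (b,c) \<in> E}"
  proof (rule ccontr)
    assume "\<not> ?thesis"
    then have lt: "\<And>c. c \<in> Y \<Longrightarrow> card {b\<in>W. (b,c) \<in> E} < K" by auto
    have "(\<Sum>c\<in>Y. card {b\<in>W. (b,c) \<in> E}) < (\<Sum>c\<in>Y. K)"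
      using finY Yne lt by (intro sum_strict_mono) auto
    also have "\<dots> = K * card Y" by simp
    finally have "(\<Sum>c\<in>Y. card {b\<in>W. (b,c) \<in> E}) < K * card Y" .
    moreover have "(\<Sum>c\<in>Y. card {b\<in>W. (b,c) \<in> E}) = (\<Sum>b\<in>W. card {c\<in>Y. (b,c) \<in> E})"
      using double_count[OF finY finW, of "\<lambda>c b. (b,c) \<in> E"] by simp
    ultimately show False using sum1 by linarith
  qed
  then obtain c where c: "c \<in> Y" "K \<le> card {b\<in>W. (b,c) \<in> E}" by blast
  show ?thesis
  proof (intro bexI exI conjI)
    show "c \<in> V" using c(1) unfolding Y_def by auto
    show "{b\<in>W. (b,c) \<in> E} \<subseteq> {b. (b,c) \<in> E}" by auto
    show "K \<le> card {b\<in>W. (b,c) \<in> E}" by (rule c(2))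
    show "inj_on \<pi> {b\<in>W. (b,c) \<in> E}" using injpi by (rule inj_on_subset) auto
    show "\<forall>b\<in>{b\<in>W. (b,c) \<in> E}. (\<pi> b, b) \<in> E" using Wpar by auto
  qed
qed



theorem theorem1p8:
  fixes V :: "'a set" and E :: "('a \<times> 'a) set" and l :: nat
  assumes "l \<ge> 1"
    and "digraph V E"
    and "V \<noteq> {}"
    and "real (min_out_degree V E) \<ge> (1 + sqrt 5) * real l"
  shows "contains_S2_in_star V E l"
proof -
  have fin: "finite V" and EV: "E \<subseteq> V \<times> V" and noloop: "\<And>v. (v,v) \<notin> E"
    using assms(2) unfolding digraph_def by auto
  have "sqrt 5 \<ge> 2"
    by (rule real_le_rsqrt) simp
  then have "(1 + sqrt 5) * real l \<ge> 3 * real l" by (simp add: mult_right_mono)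
  then have "real (min_out_degree V E) \<ge> real (3 * l)" using assms(4) by simp
  then have m3: "min_out_degree V E \<ge> 3 * l" by linarith
  have deg: "3 * l \<le> card {w. (v,w) \<in> E}" if v: "v \<in> V" for v
  proof -
    have "min_out_degree V E \<le> out_degree E v"
      unfolding min_out_degree_def using fin v by (intro Min_le) auto
    then show ?thesis using m3 unfolding out_degree_def by linarith
  qed
  obtain c W \<pi> where c: "c \<in> V" "W \<subseteq> {b. (b,c) \<in> E}" "card W \<ge> 3 * l" "inj_on \<pi> W"
      "\<forall>b\<in>W. (\<pi> b, b) \<in> E"
    using global_lemma[OF fin EV assms(3) deg] assms(1) by fastforce
  have finW: "finite W"
  proof -
    have "W \<subseteq> V" using c(2) EV by auto
    then show ?thesis using fin finite_subset by blast
  qed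
  define W' where "W' = {b\<in>W. \<pi> b \<noteq> c}"
  have c1: "card {b\<in>W. \<pi> b = c} \<le> Suc 0"
    using finW c(4) by (subst card_le_Suc0_iff_eq) (auto simp: inj_on_def)
  have "card W = card W' + card {b\<in>W. \<pi> b = c}"
  proof -
    have "W = W' \<union> {b\<in>W. \<pi> b = c}" unfolding W'_def by auto
    moreover have "W' \<inter> {b\<in>W. \<pi> b = c} = {}" unfolding W'_def by auto
    ultimately show ?thesis using finW by (metis card_Un_disjoint finite_Un)
  qed
  then have cW': "card W' + 1 \<ge> 3 * l" using c1 c(3) by linarith
  define P where "P = (\<lambda>b. (\<pi> b, b)) ` W'"
  have finP: "finite P" unfolding P_def W'_def using finW by auto
  have cP: "card P = card W'" unfolding P_def by (rule card_image) (auto simp: inj_on_def)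
  have inj1: "inj_on fst P" using c(4) unfolding P_def W'_def inj_on_def by auto
  have inj2: "inj_on snd P" unfolding P_def inj_on_def by auto
  have nl: "\<forall>p\<in>P. fst p \<noteq> snd p"
    using c(5) noloop unfolding P_def W'_def by fastforce
  obtain Q where Q: "Q \<subseteq> P" "card Q = l" "fst ` Q \<inter> snd ` Q = {}"
    using select_pairs[OF finP inj1 inj2 nl, of l] cP cW' by auto
  have finQ: "finite Q" using finite_subset[OF Q(1) finP] .
  obtain g where g: "bij_betw g {0..<card Q} Q" using ex_bij_betw_nat_finite[OF finQ] by blast
  have g': "bij_betw g {..<l} Q" using g Q(2) by (simp add: atLeast0LessThan)
  define x where "x i = fst (g i)" for i
  define a where "a i = snd (g i)" for i
  have gi: "g i \<in> Q" if "i < l" for i using g' that unfolding bij_betw_def by auto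
  have gP: "g i \<in> P" if "i < l" for i using gi that Q(1) by auto
  have ximg: "x ` {..<l} = fst ` Q" unfolding x_def using g' unfolding bij_betw_def by (auto simp: image_image[symmetric])
  have aimg: "a ` {..<l} = snd ` Q" unfolding a_def using g' unfolding bij_betw_def by (auto simp: image_image[symmetric])
  show ?thesis
    unfolding contains_S2_in_star_def
  proof (intro exI conjI)
    show "c \<in> V" by (rule c(1))
    show "inj_on x {..<l}" unfolding x_def
      using comp_inj_on[of g "{..<l}" fst] g' inj_on_subset[OF inj1 Q(1)] unfolding bij_betw_def comp_def by auto
    show "inj_on a {..<l}" unfolding a_def
      using comp_inj_on[of g "{..<l}" snd] g' inj_on_subset[OF inj2 Q(1)] unfolding bij_betw_def comp_def by auto
    show "x ` {..<l} \<inter> a ` {..<l} = {}" using ximg aimg Q(3) by simp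
    show "c \<notin> x ` {..<l}"
    proof
      assume "c \<in> x ` {..<l}"
      then obtain i where i: "i < l" "c = x i" by auto
      then obtain b where "b \<in> W'" "g i = (\<pi> b, b)" using gP[OF i(1)] unfolding P_def by auto
      then show False using i(2) unfolding x_def W'_def by auto
    qed
    show "c \<notin> a ` {..<l}"
    proof
      assume "c \<in> a ` {..<l}"
      then obtain i where i: "i < l" "c = a i" by auto
      then obtain b where "b \<in> W'" "g i = (\<pi> b, b)" using gP[OF i(1)] unfolding P_def by auto
      then have "(c, c) \<in> E" using i(2) c(2) unfolding a_def W'_def by auto
      then show False using noloop by blast
    qed
    show "\<forall>i<l. x i \<in> V \<and> a i \<in> V \<and> (x i, a i) \<in> E \<and> (a i, c) \<in> E"
    proof (intro allI impI)
      fix i assume i: "i < l"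
      then obtain b where b: "b \<in> W'" "g i = (\<pi> b, b)" using gP[OF i] unfolding P_def by auto
      then have e1: "(x i, a i) \<in> E" and e2: "(a i, c) \<in> E"
        using c(2,5) unfolding x_def a_def W'_def by auto
      then show "x i \<in> V \<and> a i \<in> V \<and> (x i, a i) \<in> E \<and> (a i, c) \<in> E" using EV by auto
    qed
  qed
qed

end
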